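(* Let $X$ be a reflexive Banach space with dual $X^*$, let $f\colon X\to\mathbb{R}$ and $\psi^*\colon X^*\to\mathbb{R}$ be differentiable, let $N\ge 1$, and let real coefficients $\{a_{k,i}\}_{0\le i<k\le N}$ and $\{b_{k,i}\}_{0\le i\le k\le N}$ be given, with the convention $b_{0,0}=-1$. Assume \[ \sum_{j=0}^{k+1} b_{k+1,j}=0\qquad\text{for } k=0,1,\dots,N-1 . \] Let $q_0\in X$ be arbitrary, set $r_0=-b_{N,N}\nabla f(q_0)$, and define for $k=0,1,\dots,N-1$ \[ q_{k+1}=q_k-\sum_{i=0}^{k} a_{N-i,\,N-1-k}\,\nabla\psi^*(r_i),\qquad r_{k+1}=r_k-\sum_{i=0}^{k+1} b_{N-i,\,N-1-k}\,\nabla f(q_i). \] Then $r_N=\nabla f(q_N)$.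
   Context: The iteration in the claim is called the mirror dual of the $N$-step coupled first-order method (CFOM) with the same coefficients, where the CFOM (for differentiable $f\colon X\to\mathbb{R}$, $\phi^*\colon X^*\to\mathbb{R}$) is: $y_0\in X^*$, $x_0=\nabla\phi^*(y_0)$, and for $k=0,\dots,N-1$, $y_{k+1}=y_k-\sum_{i=0}^{k}a_{k+1,i}\nabla f(x_i)$, $x_{k+1}=x_k-\sum_{i=0}^{k+1}b_{k+1,i}\nabla\phi^*(y_i)$. Gradients $\nabla f(x)\in X^*$ are Fréchet gradients, and $\nabla\psi^*(r)\in X^{**}=X$. *)

theory Defs
  imports "HOL-Analysis.Analysis"
begin

(* The dual space X* of a real Banach space X is modelled as the type
  of bounded linear functionals 'a \<Rightarrow>\<^sub>L real. *)

definition reflexive_space :: "'a::banach itself \<Rightarrow> bool" where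
  "reflexive_space _ \<longleftrightarrow>
     (\<forall>\<phi> :: ('a \<Rightarrow>\<^sub>L real) \<Rightarrow>\<^sub>L real. \<exists>x::'a. \<forall>h. blinfun_apply \<phi> h = blinfun_apply h x)"

definition grad :: "('a::real_normed_vector \<Rightarrow> real) \<Rightarrow> 'a \<Rightarrow> ('a \<Rightarrow>\<^sub>L real)" where
  "grad f x = (THE g. (f has_derivative blinfun_apply g) (at x))"

(* Gradient of \<psi> : X* \<rightarrow> R at r, an element of X** identified with X
  (via reflexivity): the x with D\<psi>(r)(h) = h(x) for all h in X*. *)
definition dgrad :: "(('a::real_normed_vector \<Rightarrow>\<^sub>L real) \<Rightarrow> real) \<Rightarrow> ('a \<Rightarrow>\<^sub>L real) \<Rightarrow> 'a" where
  "dgrad \<psi> r = (THE x. (\<psi> has_derivative (\<lambda>h. blinfun_apply h x)) (at r))"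

end

theory Submission
  imports Defs
begin

theorem proposition3p1:
  fixes f :: "'a::banach \<Rightarrow> real"
    and \<psi> :: "('a \<Rightarrow>\<^sub>L real) \<Rightarrow> real"
    and N :: nat
    and a b :: "nat \<Rightarrow> nat \<Rightarrow> real"
    and q :: "nat \<Rightarrow> 'a"
    and r :: "nat \<Rightarrow> ('a \<Rightarrow>\<^sub>L real)"
  assumes refl: "reflexive_space TYPE('a)"
    and f_diff: "\<And>x. f differentiable (at x)"
    and psi_diff: "\<And>y. \<psi> differentiable (at y)"
    and N_pos: "N \<ge> 1"
    and b00: "b 0 0 = -1"
    and bsum: "\<And>k. k < N \<Longrightarrow> (\<Sum>j\<le>k+1. b (k+1) j) = 0"
    and r0: "r 0 = - (b N N *\<^sub>R grad f (q 0))"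
    and q_step: "\<And>k. k < N \<Longrightarrow>
        q (Suc k) = q k - (\<Sum>i\<le>k. a (N - i) (N - 1 - k) *\<^sub>R dgrad \<psi> (r i))"
    and r_step: "\<And>k. k < N \<Longrightarrow>
        r (Suc k) = r k - (\<Sum>i\<le>k+1. b (N - i) (N - 1 - k) *\<^sub>R grad f (q i))"
  shows "r N = grad f (q N)"
proof -
  define g where "g i = grad f (q i)" for i
  have key: "m \<le> N \<Longrightarrow> r m = (\<Sum>i\<le>m. (- (\<Sum>j=N-m..N-i. b (N-i) j)) *\<^sub>R g i)" for m
  proof (induction m)
    case 0
    then show ?case using r0 by (simp add: g_def)
  next
    case (Suc m)
    have mN: "m < N" using Suc.prems by simp
    have IH: "r m = (\<Sum>i\<le>m. (- (\<Sum>j=N-m..N-i. b (N-i) j)) *\<^sub>R g i)"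
      using Suc.IH mN by simp
    have split: "\<And>i. i \<le> m \<Longrightarrow> (\<Sum>j=N-Suc m..N-i. b (N-i) j)
        = b (N-i) (N-1-m) + (\<Sum>j=N-m..N-i. b (N-i) j)"
    proof -
      fix i assume "i \<le> m"
      have e1: "N - Suc m = N-1-m" by simp
      have e2: "Suc (N-1-m) = N - m" using mN by simp
      have "N-1-m \<le> N-i" using \<open>i \<le> m\<close> by simp
      then show "(\<Sum>j=N-Suc m..N-i. b (N-i) j) = b (N-i) (N-1-m) + (\<Sum>j=N-m..N-i. b (N-i) j)"
        by (simp only: e1 sum.atLeast_Suc_atMost e2)
    qed
    have "r (Suc m) = r m - (\<Sum>i\<le>m+1. b (N - i) (N - 1 - m) *\<^sub>R g i)"
      using r_step[OF mN] by (simp add: g_def)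
    also have "\<dots> = (\<Sum>i\<le>m. (- (\<Sum>j=N-m..N-i. b (N-i) j)) *\<^sub>R g i)
        - (\<Sum>i\<le>m. b (N - i) (N - 1 - m) *\<^sub>R g i) - b (N - Suc m) (N - 1 - m) *\<^sub>R g (Suc m)"
      using IH by simp
    also have "\<dots> = (\<Sum>i\<le>m. (- (\<Sum>j=N-m..N-i. b (N-i) j) - b (N - i) (N - 1 - m)) *\<^sub>R g i)
        - b (N - Suc m) (N - 1 - m) *\<^sub>R g (Suc m)"
      by (simp add: sum_subtractf scaleR_diff_left)
    also have "\<dots> = (\<Sum>i\<le>m. (- (\<Sum>j=N-Suc m..N-i. b (N-i) j)) *\<^sub>R g i)
        + (- (\<Sum>j=N-Suc m..N-Suc m. b (N-Suc m) j)) *\<^sub>R g (Suc m)"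
    proof -
      have "(\<Sum>i\<le>m. (- (\<Sum>j=N-m..N-i. b (N-i) j) - b (N - i) (N - 1 - m)) *\<^sub>R g i)
          = (\<Sum>i\<le>m. (- (\<Sum>j=N-Suc m..N-i. b (N-i) j)) *\<^sub>R g i)"
        by (rule sum.cong) (simp_all only: atMost_iff split, simp)
      then show ?thesis by simp
    qed
    also have "\<dots> = (\<Sum>i\<le>Suc m. (- (\<Sum>j=N-Suc m..N-i. b (N-i) j)) *\<^sub>R g i)"
      by simp
    finally show ?case .
  qed
  have rN: "r N = (\<Sum>i\<le>N. (- (\<Sum>j=0..N-i. b (N-i) j)) *\<^sub>R g i)"
    using key[of N] by simp
  have z: "(\<Sum>j=0..N-i. b (N-i) j) = 0" if "i < N" for i
  proof -
    have "N - i = (N-i-1)+1" using that by simp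
    moreover have "N-i-1 < N" using that by simp
    ultimately show ?thesis using bsum[of "N-i-1"] atLeast0AtMost by metis
  qed
  have "r N = (\<Sum>i<N. (- (\<Sum>j=0..N-i. b (N-i) j)) *\<^sub>R g i) + (- (\<Sum>j=0..N-N. b (N-N) j)) *\<^sub>R g N"
    unfolding rN by (simp add: lessThan_Suc_atMost[symmetric])
  also have "\<dots> = g N" using z b00 by simp
  finally show ?thesis by (simp add: g_def)
qed

end
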